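(* Each of the following eight sets of four generalized Bell states in $\mathbb{C}^4\otimes\mathbb{C}^4$ is perfectly distinguishable by one-way LOCC using only projective measurements: $\{\ket{\psi_{00}}\}\cup T$ with $T$ one of $\{\ket{\psi_{01}},\ket{\psi_{02}},\ket{\psi_{12}}\}$, $\{\ket{\psi_{01}},\ket{\psi_{02}},\ket{\psi_{30}}\}$, $\{\ket{\psi_{01}},\ket{\psi_{11}},\ket{\psi_{21}}\}$, $\{\ket{\psi_{01}},\ket{\psi_{12}},\ket{\psi_{20}}\}$, $\{\ket{\psi_{01}},\ket{\psi_{20}},\ket{\psi_{30}}\}$, $\{\ket{\psi_{01}},\ket{\psi_{21}},\ket{\psi_{33}}\}$, $\{\ket{\psi_{02}},\ket{\psi_{10}},\ket{\psi_{21}}\}$, $\{\ket{\psi_{02}},\ket{\psi_{21}},\ket{\psi_{32}}\}$.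
   Context: Generalized Bell states in $\mathbb{C}^4\otimes\mathbb{C}^4$ (Alice holds the first factor, Bob the second): $\ket{\psi_{nm}}=\frac12\sum_{j=0}^{3}e^{2\pi i jn/4}\ket{j}_A\ket{j\oplus_4 m}_B$ for $n,m\in\{0,1,2,3\}$, where $j\oplus_4 m=(j+m)\bmod 4$. Perfect distinguishability by one-way LOCC using only projective measurements means: one party performs a projective measurement on her subsystem, communicates the outcome classically, and the other party then performs a projective measurement (depending on that outcome) whose result identifies with certainty which state of the set was shared. *)

theory Defs
  imports Complex_Main
begin

text \<open>An operator on \<open>\<complex>^4\<close> is a function \<open>nat \<Rightarrow> nat \<Rightarrow> complex\<close>
  (matrix entries), of which only indices \<open>< 4\<close> are relevant.  A state of
  \<open>\<complex>^4 \<otimes> \<complex>^4\<close> is a function \<open>nat \<Rightarrow> nat \<Rightarrow> complex\<close>, \<open>\<psi> j k\<close> being the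
  coefficient of \<open>|j>_A |k>_B\<close>.\<close>

type_synonym op4 = "nat \<Rightarrow> nat \<Rightarrow> complex"
type_synonym state44 = "nat \<Rightarrow> nat \<Rightarrow> complex"

definition dim4 :: nat where "dim4 = 4"

definition is_projector :: "op4 \<Rightarrow> bool" where
  "is_projector P \<longleftrightarrow>
     (\<forall>i<dim4. \<forall>j<dim4. P i j = cnj (P j i)) \<and>
     (\<forall>i<dim4. \<forall>j<dim4. (\<Sum>k<dim4. P i k * P k j) = P i j)"

definition proj_measurement :: "nat set \<Rightarrow> (nat \<Rightarrow> op4) \<Rightarrow> bool" where
  "proj_measurement K P \<longleftrightarrow>
     finite K \<and>
     (\<forall>a\<in>K. is_projector (P a)) \<and>
     (\<forall>a\<in>K. \<forall>b\<in>K. a \<noteq> b \<longrightarrow>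
        (\<forall>i<dim4. \<forall>j<dim4. (\<Sum>k<dim4. P a i k * P b k j) = 0)) \<and>
     (\<forall>i<dim4. \<forall>j<dim4. (\<Sum>a\<in>K. P a i j) = (if i = j then 1 else 0))"

definition bell :: "nat \<Rightarrow> nat \<Rightarrow> state44" where
  "bell n m = (\<lambda>j k. if j < dim4 \<and> k = (j + m) mod dim4
      then exp (2 * pi * \<i> * of_nat (j * n) / of_nat dim4) / 2 else 0)"

definition outcome_prob :: "state44 \<Rightarrow> op4 \<Rightarrow> op4 \<Rightarrow> complex" where
  "outcome_prob \<psi> A B =
     (\<Sum>i<dim4. \<Sum>j<dim4. \<Sum>i'<dim4. \<Sum>j'<dim4.
        cnj (\<psi> i j) * A i i' * B j j' * \<psi> i' j')"

definition one_way_alice_first :: "('l \<Rightarrow> state44) \<Rightarrow> 'l set \<Rightarrow> bool" where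
  "one_way_alice_first st S \<longleftrightarrow>
     (\<exists>K P. proj_measurement K P \<and>
        (\<forall>a\<in>K. \<exists>L Q. proj_measurement L Q \<and>
           (\<forall>b\<in>L. \<forall>x\<in>S. \<forall>y\<in>S.
               outcome_prob (st x) (P a) (Q b) \<noteq> 0 \<and>
               outcome_prob (st y) (P a) (Q b) \<noteq> 0 \<longrightarrow> x = y)))"

definition one_way_bob_first :: "('l \<Rightarrow> state44) \<Rightarrow> 'l set \<Rightarrow> bool" where
  "one_way_bob_first st S \<longleftrightarrow>
     (\<exists>L Q. proj_measurement L Q \<and>
        (\<forall>b\<in>L. \<exists>K P. proj_measurement K P \<and>
           (\<forall>a\<in>K. \<forall>x\<in>S. \<forall>y\<in>S.
               outcome_prob (st x) (P a) (Q b) \<noteq> 0 \<and>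
               outcome_prob (st y) (P a) (Q b) \<noteq> 0 \<longrightarrow> x = y)))"

definition one_way_projective_distinguishable :: "('l \<Rightarrow> state44) \<Rightarrow> 'l set \<Rightarrow> bool" where
  "one_way_projective_distinguishable st S \<longleftrightarrow>
     one_way_alice_first st S \<or> one_way_bob_first st S"

end

theory Submission imports Defs begin

definition z :: "int \<Rightarrow> complex" where "z k = cis (pi * of_int k / 4)"

lemma z_add: "z a * z b = z (a + b)"
  unfolding z_def by (simp add: cis_mult add_divide_distrib distrib_left)

lemma z_cnj: "cnj (z a) = z (- a)"
  unfolding z_def by (simp add: cis_cnj)

lemma z_8: "z (a + 8) = z a"
proof -
  have "z (a+8) = z a * z 8" by (simp add: z_add)
  moreover have "z 8 = 1" unfolding z_def
    using cis_multiple_2pi[of 1] by simp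
  ultimately show ?thesis by simp
qed

lemma z_ge8: "8 \<le> a \<Longrightarrow> z a = z (a - 8)"
  using z_8[of "a-8"] by simp
lemma z_neg: "a < 0 \<Longrightarrow> z a = z (a + 8)"
  using z_8[of a] by simp
lemma z0: "z 0 = 1" by (simp add: z_def)
lemma z4: "z 4 = -1" by (simp add: z_def)
lemma z2: "z 2 = \<i>" by (simp add: z_def)
lemma z_plus4: "z (a + 4) = - z a"
proof -
  have "z (a+4) = z a * z 4" by (simp add: z_add)
  thus ?thesis by (simp add: z4)
qed
lemma z5: "z 5 = - z 1" using z_plus4[of 1] by simp
lemma z6: "z 6 = - z 2" using z_plus4[of 2] by simp
lemma z7: "z 7 = - z 3" using z_plus4[of 3] by simp

lemmas zsimps = z_ge8 z_neg z0 z4 z5 z6 z7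

lemma sum4: "(\<Sum>k<4::nat. f k) = f 0 + f 1 + f 2 + f 3"
  by (simp add: numeral_eq_Suc)

definition R :: "(nat \<Rightarrow> complex) \<Rightarrow> op4" where "R v = (\<lambda>i j. v i * cnj (v j))"
definition ua :: "nat \<Rightarrow> nat \<Rightarrow> complex" where
  "ua a j = z (int j * int j + 2 * int a * int j) / 2"
definition cv :: "nat \<Rightarrow> nat \<times> nat \<Rightarrow> nat \<Rightarrow> complex" where
  "cv a x k = z (2 * (int k - int (snd x)) * int (fst x) - (int k - int (snd x)) * (int k - int (snd x))
                 - 2 * int a * (int k - int (snd x))) / 2"
definition amp :: "(nat \<Rightarrow> complex) \<Rightarrow> (nat \<Rightarrow> complex) \<Rightarrow> state44 \<Rightarrow> complex" where
  "amp u v \<psi> = (\<Sum>i<4. \<Sum>j<4. cnj (u i) * cnj (v j) * \<psi> i j)"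

lemma bell_z: "bell n m j k = (if j < 4 \<and> k = (j + m) mod 4 then z (2 * int j * int n) / 2 else 0)"
proof -
  have "exp (2 * pi * \<i> * of_nat (j * n) / of_nat 4) = z (2 * int j * int n)"
    unfolding z_def cis_conv_exp by (simp add: algebra_simps)
  thus ?thesis unfolding bell_def dim4_def by simp
qed

lemma R_proj:
  assumes orth: "\<And>b b'. b < 4 \<Longrightarrow> b' < 4 \<Longrightarrow> (\<Sum>k<4. cnj (V b k) * V b' k) = (if b = b' then 1 else 0)"
  and compl: "\<And>i j. i < 4 \<Longrightarrow> j < 4 \<Longrightarrow> (\<Sum>b<4. V b i * cnj (V b j)) = (if i = j then 1 else 0)"
  shows "proj_measurement {..<4} (\<lambda>b. R (V b))"
proof -
  have prod: "(\<Sum>k<4. R (V b) i k * R (V b') k j) = V b i * (\<Sum>k<4. cnj (V b k) * V b' k) * cnj (V b' j)" for b b' i j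
    unfolding R_def by (simp add: sum_distrib_left sum_distrib_right mult_ac)
  have c1: "(\<Sum>b<4. V b i * cnj (V b i)) = 1" if "i < 4" for i using compl[of i i] that by simp
  have c2: "(\<Sum>b<4. V b i * cnj (V b j)) = 0" if "i < 4" "j < 4" "i \<noteq> j" for i j using compl[of i j] that by simp
  show ?thesis unfolding proj_measurement_def is_projector_def dim4_def
    apply (auto simp: prod orth)
    apply (auto simp: R_def c1 c2)
    done
qed

lemma outcome_rank1: "outcome_prob \<psi> (R u) (R v) = cnj (amp u v \<psi>) * amp u v \<psi>"
proof -
  have 1: "cnj (amp u v \<psi>) = (\<Sum>i<4. \<Sum>j<4. u i * v j * cnj (\<psi> i j))" by (simp add: amp_def)
  have "cnj (amp u v \<psi>) * amp u v \<psi> = (\<Sum>i<4. \<Sum>j<4. u i * v j * cnj (\<psi> i j) * amp u v \<psi>)"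
    unfolding 1 by (simp add: sum_distrib_right)
  also have "\<dots> = (\<Sum>i<4. \<Sum>j<4. \<Sum>i'<4. \<Sum>j'<4. u i * v j * cnj (\<psi> i j) * (cnj (u i') * cnj (v j') * \<psi> i' j'))"
    unfolding amp_def by (simp add: sum_distrib_left)
  finally have e: "cnj (amp u v \<psi>) * amp u v \<psi> = (\<Sum>i<4. \<Sum>j<4. \<Sum>i'<4. \<Sum>j'<4. u i * v j * cnj (\<psi> i j) * (cnj (u i') * cnj (v j') * \<psi> i' j'))" .
  show ?thesis unfolding outcome_prob_def R_def dim4_def e
    by (intro sum.cong refl) (simp add: mult_ac)
qed

lemma all4: "(\<forall>n<(4::nat). P n) = (P 0 \<and> P 1 \<and> P 2 \<and> P 3)"
  by (auto simp: numeral_eq_Suc less_Suc_eq)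

schematic_goal cond_all0: "(\<forall>a<4. \<forall>n<4. \<forall>m<4. \<forall>k<4.
   (\<Sum>j<4. cnj (ua a j) * bell n m j k) = cv a (n, m) k / 2) \<and> (?uu::bool) = ?uu"
  unfolding all4 by (simp add: sum4 bell_z ua_def cv_def z_cnj z_add zsimps)

lemmas cond_all = cond_all0[THEN conjunct1]

schematic_goal alice_meas0: "proj_measurement {..<4} (\<lambda>a. R (ua a)) \<and> (?uu::bool) = ?uu"
proof -
  have "proj_measurement {..<4} (\<lambda>a. R (ua a))"
proof (rule R_proj)
  have o: "\<forall>b<4. \<forall>b'<4. (\<Sum>k<4. cnj (ua b k) * ua b' k) = (if b = b' then 1 else 0)"
    unfolding all4 by (simp add: sum4 ua_def z_cnj z_add zsimps)
  have c: "\<forall>i<4. \<forall>j<4. (\<Sum>b<4. ua b i * cnj (ua b j)) = (if i = j then 1 else 0)"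
    unfolding all4 by (simp add: sum4 ua_def z_cnj z_add zsimps)
  show "\<And>b b'. b < 4 \<Longrightarrow> b' < 4 \<Longrightarrow> (\<Sum>k<4. cnj (ua b k) * ua b' k) = (if b = b' then 1 else 0)"
    using o by blast
  show "\<And>i j. i < 4 \<Longrightarrow> j < 4 \<Longrightarrow> (\<Sum>b<4. ua b i * cnj (ua b j)) = (if i = j then 1 else 0)"
    using c by blast
qed
  thus "?thesis True" by simp
qed

lemmas alice_meas = alice_meas0[THEN conjunct1]

lemma amp_eq:
  assumes "a < 4" "n < 4" "m < 4"
  shows "amp (ua a) v (bell n m) = (\<Sum>k<4. cnj (v k) * cv a (n, m) k) / 2"
proof -
  have "amp (ua a) v (bell n m) = (\<Sum>j<4. \<Sum>i<4. cnj (v j) * (cnj (ua a i) * bell n m i j))"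
    unfolding amp_def by (subst sum.swap) (simp add: mult_ac)
  also have "\<dots> = (\<Sum>j<4. cnj (v j) * (\<Sum>i<4. cnj (ua a i) * bell n m i j))"
    by (simp add: sum_distrib_left)
  also have "\<dots> = (\<Sum>j<4. cnj (v j) * (cv a (n, m) j / 2))"
    using cond_all assms by (intro sum.cong refl) auto
  finally show ?thesis by (simp add: sum_divide_distrib)
qed

lemma good_set:
  fixes xs :: "(nat \<times> nat) list"
  assumes len: "length xs = 4" and rng: "\<forall>x\<in>set xs. fst x < 4 \<and> snd x < 4"
  and orth: "\<forall>a<4. \<forall>b<4. \<forall>b'<4. (\<Sum>k<4. cnj (cv a (xs!b) k) * cv a (xs!b') k) = (if b = b' then 1 else 0)"
  and compl: "\<forall>a<4. \<forall>i<4. \<forall>j<4. (\<Sum>b<4. cv a (xs!b) i * cnj (cv a (xs!b) j)) = (if i = j then 1 else 0)"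
  shows "one_way_projective_distinguishable (\<lambda>(n, m). bell n m) (set xs)"
proof -
  have zero: "outcome_prob ((\<lambda>(n, m). bell n m) x) (R (ua a)) (R (cv a (xs!b))) = 0"
    if ha: "a < 4" and hb: "b < 4" and hx: "x \<in> set xs" and hne: "x \<noteq> xs!b" for a b x
  proof -
    obtain c where c: "c < 4" "x = xs!c" using hx len by (auto simp: in_set_conv_nth)
    with hne have cb: "c \<noteq> b" by auto
    obtain n m where x: "x = (n, m)" by (cases x)
    have nm: "n < 4" "m < 4" using rng hx x by auto
    have o: "(\<Sum>k<4. cnj (cv a (xs!b) k) * cv a (xs!c) k) = 0" using orth ha hb c cb by auto
    have "amp (ua a) (cv a (xs!b)) (bell n m) = 0"
      using amp_eq[OF ha nm, of "cv a (xs!b)"] o c(2) x by simp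
    thus ?thesis by (simp add: x outcome_rank1)
  qed
  have bob: "proj_measurement {..<4} (\<lambda>b. R (cv a (xs!b)))" if "a < 4" for a
    by (rule R_proj) (use orth compl that in auto)
  have step: "\<exists>L Q. proj_measurement L Q \<and> (\<forall>b\<in>L. \<forall>x\<in>set xs. \<forall>y\<in>set xs.
        outcome_prob ((\<lambda>(n, m). bell n m) x) (R (ua a)) (Q b) \<noteq> 0 \<and>
        outcome_prob ((\<lambda>(n, m). bell n m) y) (R (ua a)) (Q b) \<noteq> 0 \<longrightarrow> x = y)"
    if ha: "a < 4" for a
    apply (rule exI[of _ "{..<4}"], rule exI[of _ "\<lambda>b. R (cv a (xs!b))"])
    apply (intro conjI ballI impI)
     apply (rule bob[OF ha])
    apply (metis zero lessThan_iff ha)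
    done
  show ?thesis unfolding one_way_projective_distinguishable_def one_way_alice_first_def
    using alice_meas step by blast
qed

schematic_goal ls10: "one_way_projective_distinguishable (\<lambda>(n, m). bell n m) (insert ((0::nat), (0::nat)) {(0,1),(0,2),(1,2)}) \<and> (?uu::bool) = ?uu"
proof -
  have "one_way_projective_distinguishable (\<lambda>(n, m). bell n m) (set [(0,0),(0,1),(0,2),(1,2)])"
    by (rule good_set) (simp_all add: all4 sum4 cv_def z_cnj z_add zsimps)
  thus "?thesis True" by simp
qed

schematic_goal ls20: "one_way_projective_distinguishable (\<lambda>(n, m). bell n m) (insert ((0::nat), (0::nat)) {(0,1),(0,2),(3,0)}) \<and> (?uu::bool) = ?uu"
proof -
  have "one_way_projective_distinguishable (\<lambda>(n, m). bell n m) (set [(0,0),(0,1),(0,2),(3,0)])"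
    by (rule good_set) (simp_all add: all4 sum4 cv_def z_cnj z_add zsimps)
  thus "?thesis True" by simp
qed

schematic_goal ls30: "one_way_projective_distinguishable (\<lambda>(n, m). bell n m) (insert ((0::nat), (0::nat)) {(0,1),(1,1),(2,1)}) \<and> (?uu::bool) = ?uu"
proof -
  have "one_way_projective_distinguishable (\<lambda>(n, m). bell n m) (set [(0,0),(0,1),(1,1),(2,1)])"
    by (rule good_set) (simp_all add: all4 sum4 cv_def z_cnj z_add zsimps)
  thus "?thesis True" by simp
qed

schematic_goal ls40: "one_way_projective_distinguishable (\<lambda>(n, m). bell n m) (insert ((0::nat), (0::nat)) {(0,1),(1,2),(2,0)}) \<and> (?uu::bool) = ?uu"
proof -
  have "one_way_projective_distinguishable (\<lambda>(n, m). bell n m) (set [(0,0),(0,1),(1,2),(2,0)])"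
    by (rule good_set) (simp_all add: all4 sum4 cv_def z_cnj z_add zsimps)
  thus "?thesis True" by simp
qed

schematic_goal ls50: "one_way_projective_distinguishable (\<lambda>(n, m). bell n m) (insert ((0::nat), (0::nat)) {(0,1),(2,0),(3,0)}) \<and> (?uu::bool) = ?uu"
proof -
  have "one_way_projective_distinguishable (\<lambda>(n, m). bell n m) (set [(0,0),(0,1),(2,0),(3,0)])"
    by (rule good_set) (simp_all add: all4 sum4 cv_def z_cnj z_add zsimps)
  thus "?thesis True" by simp
qed

schematic_goal ls60: "one_way_projective_distinguishable (\<lambda>(n, m). bell n m) (insert ((0::nat), (0::nat)) {(0,1),(2,1),(3,3)}) \<and> (?uu::bool) = ?uu"
proof -
  have "one_way_projective_distinguishable (\<lambda>(n, m). bell n m) (set [(0,0),(0,1),(2,1),(3,3)])"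
    by (rule good_set) (simp_all add: all4 sum4 cv_def z_cnj z_add zsimps)
  thus "?thesis True" by simp
qed

schematic_goal ls70: "one_way_projective_distinguishable (\<lambda>(n, m). bell n m) (insert ((0::nat), (0::nat)) {(0,2),(1,0),(2,1)}) \<and> (?uu::bool) = ?uu"
proof -
  have "one_way_projective_distinguishable (\<lambda>(n, m). bell n m) (set [(0,0),(0,2),(1,0),(2,1)])"
    by (rule good_set) (simp_all add: all4 sum4 cv_def z_cnj z_add zsimps)
  thus "?thesis True" by simp
qed

schematic_goal ls80: "one_way_projective_distinguishable (\<lambda>(n, m). bell n m) (insert ((0::nat), (0::nat)) {(0,2),(2,1),(3,2)}) \<and> (?uu::bool) = ?uu"
proof -
  have "one_way_projective_distinguishable (\<lambda>(n, m). bell n m) (set [(0,0),(0,2),(2,1),(3,2)])"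
    by (rule good_set) (simp_all add: all4 sum4 cv_def z_cnj z_add zsimps)
  thus "?thesis True" by simp
qed

lemmas ls1 = ls10[THEN conjunct1]
lemmas ls2 = ls20[THEN conjunct1]
lemmas ls3 = ls30[THEN conjunct1]
lemmas ls4 = ls40[THEN conjunct1]
lemmas ls5 = ls50[THEN conjunct1]
lemmas ls6 = ls60[THEN conjunct1]
lemmas ls7 = ls70[THEN conjunct1]
lemmas ls8 = ls80[THEN conjunct1]

theorem theorem5:
  shows "\<forall>T \<in> {{(0,1),(0,2),(1,2)}, {(0,1),(0,2),(3,0)}, {(0,1),(1,1),(2,1)},
                {(0,1),(1,2),(2,0)}, {(0,1),(2,0),(3,0)}, {(0,1),(2,1),(3,3)},
                {(0,2),(1,0),(2,1)}, {(0,2),(2,1),(3,2)}}.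
           one_way_projective_distinguishable (\<lambda>(n, m). bell n m)
             (insert ((0::nat), (0::nat)) T)"
  using ls1 ls2 ls3 ls4 ls5 ls6 ls7 ls8 by (simp only: ball_simps)

end
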